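(* Let $\mathbf X=\{X_n\}$ and $\mathbf Y=\{Y_n\}$ be general sources such that $$\inf_{0<\epsilon<1}\ \liminf_{n\to\infty}\ \inf_{0\le\delta<1-\epsilon}\{c_n^x(\delta+\epsilon)-c_n^y(\delta)\}\ \ge 0 .$$ Then there exist joint pmfs $P_{X_nY_n}$ with marginals $P_{X_n}$ and $P_{Y_n}$, for each $n$, such that for every $\gamma>0$ $$\lim_{n\to\infty}P_{X_nY_n}\Big\{\tfrac1n\log\tfrac{1}{P_{X_n}(X_n)}-\tfrac1n\log\tfrac{1}{P_{Y_n}(Y_n)}<-\gamma\Big\}=0 .$$ In other words, $\text{p-}\liminf_{n\to\infty}\{\frac1n\log\frac{1}{P_{X_n}(X_n)}-\frac1n\log\frac{1}{P_{Y_n}(Y_n)}\}\ge0$ under $P_{X_nY_n}$.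
   Context: Logarithms are natural. A general source $\mathbf X=\{X_n\}_{n\ge1}$ is a sequence of random variables, $X_n$ taking values in a countable set $\mathcal X_n$, with no consistency requirements between different $n$. Similarly $Y_n$ takes values in a countable set $\mathcal Y_n$. For a random variable $Z$ on a countable set $\mathcal Z$ with pmf $P_Z$, list the elements of positive probability as $z_1,z_2,\dots$ (a finite or countably infinite list) with $P_Z(z_1)\ge P_Z(z_2)\ge\cdots$ (ties broken arbitrarily). Set $\delta_0=0$ and $\delta_k=\sum_{i\le k}P_Z(z_i)$. For $\delta\in[0,1)$ define $c^z(\delta)=\log\frac{1}{P_Z(z_k)}$, where $k$ is the unique index with $\delta\in[\delta_{k-1},\delta_k)$. Here $c_n^x$ and $c_n^y$ denote this function built from $P_{X_n}$ and from $P_{Y_n}$ respectively. *)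

theory Defs
  imports "HOL-Probability.Probability"
begin

definition sorted_enum :: "'a pmf \<Rightarrow> enat \<Rightarrow> (nat \<Rightarrow> 'a) \<Rightarrow> bool" where
  "sorted_enum P K z \<longleftrightarrow>
     bij_betw z {k. enat k < K} (set_pmf P) \<and>
     (\<forall>i j. enat j < K \<longrightarrow> i \<le> j \<longrightarrow> pmf P (z j) \<le> pmf P (z i))"

text \<open>The function c(delta) built from a pmf: with delta_k the partial sums
  (0-based indexing: the k-th element z k covers [sum_{i<k}, sum_{i<=k})),
  c(delta) = ln (1 / P(z k)) for the unique k with delta in that interval.
  Ties are broken by an arbitrary (Hilbert-chosen) sorted listing.\<close>
definition cfun :: "'a pmf \<Rightarrow> real \<Rightarrow> real" where
  "cfun P \<delta> =
    (let Kz = (SOME Kz. sorted_enum P (fst Kz) (snd Kz)); K = fst Kz; z = snd Kz in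
     ln (1 / pmf P (z (THE k. enat k < K \<and> (\<Sum>i<k. pmf P (z i)) \<le> \<delta>
                                      \<and> \<delta> < (\<Sum>i<Suc k. pmf P (z i))))))"

end

theory Submission
  imports Defs
begin


lemma finite_pmf_ge:
  fixes P :: "'a pmf" assumes c: "c > 0"
  shows "finite {y. pmf P y \<ge> c}"
proof (rule ccontr)
  assume inf: "infinite {y. pmf P y \<ge> c}"
  obtain n :: nat where n: "real n > 1 / c" using reals_Archimedean2 by blast
  obtain B where B: "finite B" "card B = n" "B \<subseteq> {y. pmf P y \<ge> c}"
    using infinite_arbitrarily_large[OF inf] by blast
  have "real n * c \<le> sum (pmf P) B"
    using sum_bounded_below[of B c "pmf P"] B by auto
  also have "\<dots> = measure P B" using B by (simp add: measure_measure_pmf_finite)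
  also have "\<dots> \<le> 1" by simp
  finally have "real n * c \<le> 1" .
  moreover have "real n * c > 1" using n c by (simp add: field_simps)
  ultimately show False by simp
qed

lemma sorted_enum_exists: "\<exists>K z. sorted_enum P K z"
proof -
  define S where "S = set_pmf P"
  have cS: "countable S" unfolding S_def by simp
  define t where "t = to_nat_on S"
  have tinj: "inj_on t S" unfolding t_def using cS by auto
  define lt where "lt x y \<longleftrightarrow> pmf P x > pmf P y \<or> (pmf P x = pmf P y \<and> t x < t y)" for x y
  define pr where "pr x = {y\<in>S. lt y x}" for x
  define r where "r x = card (pr x)" for x
  have fin: "finite (pr x)" if "x \<in> S" for x
  proof -
    have "pmf P x > 0" using that unfolding S_def by (simp add: pmf_positive)
    then have "finite {y. pmf P y \<ge> pmf P x}" by (rule finite_pmf_ge)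
    moreover have "pr x \<subseteq> {y. pmf P y \<ge> pmf P x}" unfolding pr_def lt_def by auto
    ultimately show ?thesis by (rule finite_subset[rotated])
  qed
  have rmono: "r x < r y" if "x \<in> S" "y \<in> S" "lt x y" for x y
  proof -
    have "pr x \<subset> pr y"
    proof
      show "pr x \<subseteq> pr y" using that unfolding pr_def lt_def by auto
      have "x \<in> pr y" "x \<notin> pr x" using that unfolding pr_def lt_def by auto
      then show "pr x \<noteq> pr y" by blast
    qed
    then show ?thesis unfolding r_def using fin[OF that(2)] by (simp add: psubset_card_mono)
  qed
  have tot: "lt x y \<or> lt y x" if "x \<in> S" "y \<in> S" "x \<noteq> y" for x y
    using that tinj unfolding lt_def inj_on_def by (metis linorder_neqE_nat linorder_neqE_linordered_idom)
  have rinj: "inj_on r S"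
    unfolding inj_on_def using tot rmono by (metis less_irrefl)
  define R where "R = r ` S"
  have rbij: "bij_betw r S R" using rinj unfolding R_def by (simp add: bij_betw_imageI)
  define K where "K = (if finite R then enat (card R) else \<infinity>)"
  have ebij: "bij_betw (enumerate R) {k. enat k < K} R"
  proof (cases "finite R")
    case True
    then have "{k. enat k < K} = {..<card R}" unfolding K_def by auto
    then show ?thesis using finite_bij_enumerate[OF True] by simp
  next
    case False
    then show ?thesis using bij_enumerate[OF False] unfolding K_def by simp
  qed
  have emono: "enumerate R i < enumerate R j" if "i < j" "enat j < K" for i j
  proof (cases "finite R")
    case True
    then show ?thesis using that finite_enumerate_mono[OF that(1) True] unfolding K_def by simp
  next
    case False
    then show ?thesis using enumerate_mono[OF that(1) False] by simp
  qed
  define z where "z = inv_into S r \<circ> enumerate R"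
  have zbij: "bij_betw z {k. enat k < K} S"
    unfolding z_def using ebij bij_betw_inv_into[OF rbij] by (rule bij_betw_trans)
  have rz: "r (z k) = enumerate R k" if "enat k < K" for k
    using ebij that rbij unfolding z_def bij_betw_def
    by (simp add: f_inv_into_f image_iff) (metis R_def f_inv_into_f imageI mem_Collect_eq)
  have zmono: "pmf P (z j) \<le> pmf P (z i)" if "enat j < K" "i \<le> j" for i j
  proof (cases "i = j")
    case False
    then have ij: "i < j" using that by simp
    have iK: "enat i < K" using that(1) ij by (meson enat_ord_simps(2) order.strict_trans)
    have zi: "z i \<in> S" and zj: "z j \<in> S" using zbij iK that(1) unfolding bij_betw_def by auto
    show ?thesis
    proof (rule ccontr)
      assume "\<not> ?thesis"
      then have "lt (z j) (z i)" unfolding lt_def by auto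
      then have "r (z j) < r (z i)" using rmono zi zj by blast
      then show False using emono[OF ij that(1)] rz[OF iK] rz[OF that(1)] by simp
    qed
  qed simp
  have "sorted_enum P K z" unfolding sorted_enum_def using zbij zmono unfolding S_def by blast
  then show ?thesis by blast
qed


lemma psum_le1:
  assumes bij: "bij_betw z {k. enat k < K} (set_pmf P)" and m: "enat m \<le> K"
  shows "(\<Sum>i<m. pmf P (z i)) = measure P (z ` {..<m})" "(\<Sum>i<m. pmf P (z i)) \<le> 1"
proof -
  have inj: "inj_on z {..<m}"
    using bij m unfolding bij_betw_def
    by (rule_tac inj_on_subset[of _ "{k. enat k < K}"]) (auto, metis enat_ord_simps(2) order.strict_trans2)
  show e: "(\<Sum>i<m. pmf P (z i)) = measure P (z ` {..<m})"
    using inj by (simp add: measure_measure_pmf_finite sum.reindex)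
  show "(\<Sum>i<m. pmf P (z i)) \<le> 1" unfolding e by simp
qed

lemma psum_exceeds:
  assumes bij: "bij_betw z {k. enat k < K} (set_pmf P)" and v: "v < 1"
  shows "\<exists>m. enat m \<le> K \<and> v < (\<Sum>i<m. pmf P (z i))"
proof (cases K)
  case (enat n)
  have "z ` {..<n} = set_pmf P" using bij unfolding bij_betw_def enat by (auto simp: lessThan_def)
  then have "(\<Sum>i<n. pmf P (z i)) = 1"
    using psum_le1(1)[OF bij, of n] enat by (simp add: measure_pmf.prob_eq_1 AE_measure_pmf)
  then show ?thesis using v enat by (intro exI[of _ n]) auto
next
  case infinity
  have bij': "bij_betw z UNIV (set_pmf P)" using bij infinity by simp
  have "(\<integral>\<^sup>+i. ennreal (pmf P (z i)) \<partial>count_space UNIV) = (\<integral>\<^sup>+x. ennreal (pmf P x) \<partial>count_space (set_pmf P))"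
    by (rule nn_integral_bij_count_space[OF bij'])
  also have "\<dots> = emeasure P (set_pmf P)" by (rule nn_integral_pmf)
  also have "\<dots> = 1" by (simp add: measure_pmf.emeasure_eq_1_AE AE_measure_pmf)
  finally have "(\<Sum>i. ennreal (pmf P (z i))) = 1" by (simp add: nn_integral_count_space_nat)
  then have "(\<lambda>i. ennreal (pmf P (z i))) sums ennreal 1"
    by (metis ennreal_1 summable_sums summableI)
  then have "(\<lambda>i. pmf P (z i)) sums 1" using sums_ennreal[of "\<lambda>i. pmf P (z i)" 1] by simp
  then have "(\<lambda>m. \<Sum>i<m. pmf P (z i)) \<longlonglongrightarrow> 1" by (simp add: sums_def)
  then have "eventually (\<lambda>m. v < (\<Sum>i<m. pmf P (z i))) sequentially"
    using v by (rule order_tendstoD)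
  then obtain m where "v < (\<Sum>i<m. pmf P (z i))" by (meson eventually_sequentially order_refl)
  then show ?thesis using infinity by auto
qed

definition IP :: "'a pmf \<Rightarrow> enat \<Rightarrow> (nat \<Rightarrow> 'a) \<Rightarrow> nat \<Rightarrow> real \<Rightarrow> bool" where
  "IP P K z k v \<longleftrightarrow> enat k < K \<and> (\<Sum>i<k. pmf P (z i)) \<le> v \<and> v < (\<Sum>i<Suc k. pmf P (z i))"

lemma psum_mono: "(k::nat) \<le> j \<Longrightarrow> (\<Sum>i<k. pmf P (z i)) \<le> (\<Sum>i<j. pmf P (z i))"
  by (rule sum_mono2) (auto simp: pmf_nonneg)

lemma IP_unique: assumes "IP P K z k v" "IP P K z j v" shows "k = j"
proof (rule ccontr)
  assume "k \<noteq> j"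
  then have "Suc k \<le> j \<or> Suc j \<le> k" by auto
  then show False using assms psum_mono[of "Suc k" j P z] psum_mono[of "Suc j" k P z]
    unfolding IP_def by auto
qed

lemma IP_exists:
  assumes bij: "bij_betw z {k. enat k < K} (set_pmf P)" and v: "0 \<le> v" "v < 1"
  shows "\<exists>k. IP P K z k v"
proof -
  obtain m where m: "enat m \<le> K" "v < (\<Sum>i<m. pmf P (z i))" using psum_exceeds[OF bij v(2)] by blast
  define j where "j = (LEAST j. v < (\<Sum>i<j. pmf P (z i)))"
  have j: "v < (\<Sum>i<j. pmf P (z i))" unfolding j_def by (rule LeastI[of _ m]) (rule m(2))
  have jm: "j \<le> m" unfolding j_def by (rule Least_le) (rule m(2))
  have "j \<noteq> 0" using j v by (intro notI) simp
  then obtain k where k: "j = Suc k" by (cases j) auto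
  have "\<not> v < (\<Sum>i<k. pmf P (z i))" using k unfolding j_def
    by (metis lessI not_less_Least)
  moreover have "enat k < K" using jm k m(1)
    by (metis Suc_le_eq enat_ord_simps(2) order.strict_trans2)
  ultimately show ?thesis using j k unfolding IP_def by (intro exI[of _ k]) auto
qed

lemma IP_iff:
  assumes bij: "bij_betw z {k. enat k < K} (set_pmf P)" and v: "0 \<le> v" "v < 1"
  shows "IP P K z k v \<longleftrightarrow> (THE k. IP P K z k v) = k"
proof -
  obtain k0 where k0: "IP P K z k0 v" using IP_exists[OF assms] by blast
  have "(THE k. IP P K z k v) = k0" using k0 IP_unique by blast
  then show ?thesis using k0 IP_unique by metis
qed

lemma IP_in:
  assumes bij: "bij_betw z {k. enat k < K} (set_pmf P)" and v: "0 \<le> v" "v < 1"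
  shows "IP P K z (THE k. IP P K z k v) v"
  using IP_exists[OF assms] IP_unique by (metis theI)



definition SK :: "'a pmf \<Rightarrow> enat \<times> (nat \<Rightarrow> 'a)" where
  "SK P = (SOME Kz. sorted_enum P (fst Kz) (snd Kz))"

definition qfun :: "'a pmf \<Rightarrow> real \<Rightarrow> 'a" where
  "qfun P v = snd (SK P) (THE k. IP P (fst (SK P)) (snd (SK P)) k v)"

lemma cfun_qfun: "cfun P v = ln (1 / pmf P (qfun P v))"
  unfolding cfun_def qfun_def SK_def IP_def Let_def by simp

lemma SK_enum: "sorted_enum P (fst (SK P)) (snd (SK P))"
proof -
  have "\<exists>Kz. sorted_enum P (fst Kz) (snd Kz)" using sorted_enum_exists[of P] by auto
  then show ?thesis unfolding SK_def by (rule someI_ex)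
qed

lemma SK_bij: "bij_betw (snd (SK P)) {k. enat k < fst (SK P)} (set_pmf P)"
  using SK_enum unfolding sorted_enum_def by blast

lemma qfun_meas: "qfun P \<in> borel \<rightarrow>\<^sub>M count_space UNIV"
proof -
  have "(\<lambda>v. THE k. IP P (fst (SK P)) (snd (SK P)) k v) \<in> borel \<rightarrow>\<^sub>M count_space UNIV"
    by (rule measurable_THE[where I=UNIV]) (auto simp: IP_def intro: IP_unique)
  then show ?thesis unfolding qfun_def by (rule measurable_compose) simp
qed

lemma qfun_in: "0 \<le> v \<Longrightarrow> v < 1 \<Longrightarrow> qfun P v \<in> set_pmf P"
  using IP_in[OF SK_bij] SK_bij[of P] unfolding qfun_def IP_def bij_betw_def by auto

lemma qfun_marg:
  assumes gm: "\<And>a b. 0 \<le> a \<Longrightarrow> a \<le> b \<Longrightarrow> b \<le> 1 \<Longrightarrow> measure lborel {v\<in>{0..<1}. g v \<in> {a..<b}} = b - a"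
    and gr: "\<And>v. v \<in> {0..<1} \<Longrightarrow> g v \<in> {0..<1::real}"
  shows "measure lborel ({v. qfun P (g v) = x} \<inter> {0..<1}) = pmf P x"
proof (cases "x \<in> set_pmf P")
  case False
  then have "{v. qfun P (g v) = x} \<inter> {0..<1} = {}" using qfun_in gr by fastforce
  then show ?thesis using False by (simp add: set_pmf_iff)
next
  case True
  define K where "K = fst (SK P)"
  define z where "z = snd (SK P)"
  have bij: "bij_betw z {k. enat k < K} (set_pmf P)" using SK_bij unfolding K_def z_def by blast
  obtain k where k: "enat k < K" "z k = x" using True bij unfolding bij_betw_def by (metis (mono_tags, lifting) imageE mem_Collect_eq)
  define a where "a = (\<Sum>i<k. pmf P (z i))"
  define b where "b = (\<Sum>i<Suc k. pmf P (z i))"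
  have a0: "0 \<le> a" unfolding a_def by (simp add: sum_nonneg)
  have ab: "a \<le> b" unfolding a_def b_def by (rule psum_mono) simp
  have b1: "b \<le> 1" unfolding b_def using psum_le1(2)[OF bij, of "Suc k"] k(1)
    by (simp add: Suc_ile_eq)
  have ba: "b - a = pmf P x" unfolding a_def b_def using k by simp
  have "{v. qfun P (g v) = x} \<inter> {0..<1} = {v\<in>{0..<1}. g v \<in> {a..<b}}"
  proof (intro set_eqI iffI)
    fix v assume v: "v \<in> {v. qfun P (g v) = x} \<inter> {0..<1}"
    then have gv: "0 \<le> g v" "g v < 1" using gr by auto
    define j where "j = (THE k. IP P K z k (g v))"
    have ij: "IP P K z j (g v)" unfolding j_def using IP_in[OF bij gv] .
    have "z j = x" using v unfolding qfun_def j_def K_def z_def by simp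
    then have "j = k" using bij k ij unfolding bij_betw_def inj_on_def IP_def by auto
    then show "v \<in> {v\<in>{0..<1}. g v \<in> {a..<b}}" using ij v unfolding IP_def a_def b_def by auto
  next
    fix v assume v: "v \<in> {v\<in>{0..<1}. g v \<in> {a..<b}}"
    then have gv: "0 \<le> g v" "g v < 1" using gr by auto
    have "IP P K z k (g v)" using v k unfolding IP_def a_def b_def by auto
    then have "(THE k. IP P K z k (g v)) = k" using IP_iff[OF bij gv] by blast
    then show "v \<in> {v. qfun P (g v) = x} \<inter> {0..<1}" using v k unfolding qfun_def K_def z_def by auto
  qed
  then show ?thesis using gm[OF a0 ab b1] ba by simp
qed

lemma marg_id: "0 \<le> a \<Longrightarrow> a \<le> b \<Longrightarrow> b \<le> 1 \<Longrightarrow> measure lborel {v\<in>{0..<1::real}. v \<in> {a..<b}} = b - a"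
proof -
  assume "0 \<le> a" "a \<le> b" "b \<le> 1"
  then have "{v\<in>{0..<1::real}. v \<in> {a..<b}} = {a..<b}" by auto
  then show ?thesis using \<open>a \<le> b\<close> by simp
qed

definition gsh :: "real \<Rightarrow> real \<Rightarrow> real" where
  "gsh e v = (if v < 1 - e then v + e else v - (1 - e))"

lemma gsh_meas: "gsh e \<in> borel_measurable borel"
  unfolding gsh_def by measurable

lemma gsh_range: "0 < e \<Longrightarrow> e < 1 \<Longrightarrow> v \<in> {0..<1} \<Longrightarrow> gsh e v \<in> {0..<1}"
  unfolding gsh_def by auto

lemma marg_gsh:
  assumes e: "0 < e" "e < 1" and ab: "0 \<le> a" "a \<le> b" "b \<le> 1"
  shows "measure lborel {v\<in>{0..<1::real}. gsh e v \<in> {a..<b}} = b - a"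
proof -
  consider "b \<le> e" | "e \<le> a" | "a < e" "e < b" by linarith
  then show ?thesis
  proof cases
    case 1
    then have "{v\<in>{0..<1::real}. gsh e v \<in> {a..<b}} = {a+1-e..<b+1-e}"
      using e ab unfolding gsh_def by auto
    then show ?thesis using ab by simp
  next
    case 2
    then have "{v\<in>{0..<1::real}. gsh e v \<in> {a..<b}} = {a-e..<b-e}"
      using e ab unfolding gsh_def by auto
    then show ?thesis using ab by simp
  next
    case 3
    then have "{v\<in>{0..<1::real}. gsh e v \<in> {a..<b}} = {0..<b-e} \<union> {a+1-e..<1}"
      using e ab unfolding gsh_def by auto
    moreover have "measure lborel ({0..<b-e} \<union> {a+1-e..<1}) = (b - e) + (1 - (a+1-e))"
      using 3 e ab by (subst measure_Union) auto
    ultimately show ?thesis by simp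
  qed
qed



definition UM :: "real measure" where "UM = uniform_measure lborel {0..<1}"

lemma UM_prob: "prob_space UM"
  unfolding UM_def by (rule prob_space_uniform_measure) auto

lemma space_UM[simp]: "space UM = UNIV" unfolding UM_def by simp
lemma sets_UM[simp]: "sets UM = sets borel" unfolding UM_def by simp

lemma UM_measure: "A \<in> sets borel \<Longrightarrow> measure UM A = measure lborel ({0..<1} \<inter> A)"
  unfolding UM_def by (subst measure_uniform_measure) auto

lemma idx_meas: "(\<lambda>v. THE k. IP P (fst (SK P)) (snd (SK P)) k v) \<in> borel \<rightarrow>\<^sub>M count_space UNIV"
  by (rule measurable_THE[where I=UNIV]) (auto simp: IP_def intro: IP_unique)

definition hh :: "'a pmf \<Rightarrow> 'b pmf \<Rightarrow> real \<Rightarrow> real \<Rightarrow> 'a \<times> 'b" where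
  "hh PX PY e u = (qfun PX (gsh e u), qfun PY u)"

lemma hh_meas: "hh PX PY e \<in> borel \<rightarrow>\<^sub>M count_space UNIV"
proof -
  define ix where "ix = (\<lambda>v. THE k. IP PX (fst (SK PX)) (snd (SK PX)) k v)"
  define iy where "iy = (\<lambda>v. THE k. IP PY (fst (SK PY)) (snd (SK PY)) k v)"
  have [measurable]: "ix \<in> borel \<rightarrow>\<^sub>M count_space UNIV" "iy \<in> borel \<rightarrow>\<^sub>M count_space UNIV"
    unfolding ix_def iy_def by (rule idx_meas)+
  have [measurable]: "gsh e \<in> borel_measurable borel" by (rule gsh_meas)
  have m: "(\<lambda>u. (ix (gsh e u), iy u)) \<in> borel \<rightarrow>\<^sub>M count_space UNIV"
  proof (subst measurable_count_space_eq2_countable, safe)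
    fix a b
    have "(\<lambda>u. (ix (gsh e u), iy u)) -` {(a, b)} \<inter> space borel = {u. ix (gsh e u) = a} \<inter> {u. iy u = b}"
      by auto
    also have "\<dots> \<in> sets borel" by measurable
    finally show "(\<lambda>u. (ix (gsh e u), iy u)) -` {(a, b)} \<inter> space borel \<in> sets borel" .
  qed auto
  have "(\<lambda>kj. (snd (SK PX) (fst kj), snd (SK PY) (snd kj))) \<circ> (\<lambda>u. (ix (gsh e u), iy u)) \<in> borel \<rightarrow>\<^sub>M count_space UNIV"
    using m by (rule measurable_comp) simp
  moreover have "(\<lambda>kj. (snd (SK PX) (fst kj), snd (SK PY) (snd kj))) \<circ> (\<lambda>u. (ix (gsh e u), iy u)) = hh PX PY e"
    unfolding hh_def qfun_def ix_def iy_def by (simp add: comp_def)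
  ultimately show ?thesis by simp
qed

lemma qfun_comp_meas: "g \<in> borel_measurable borel \<Longrightarrow> {u. qfun P (g u) = x} \<in> sets borel"
proof -
  assume g: "g \<in> borel_measurable borel"
  have "(\<lambda>u. qfun P (g u)) \<in> borel \<rightarrow>\<^sub>M count_space UNIV"
    using measurable_compose[OF g qfun_meas] .
  from measurable_sets[OF this, of "{x}"] show ?thesis by (simp add: vimage_def)
qed

lemma coupling_exists:
  fixes PX :: "'a pmf" and PY :: "'b pmf"
  assumes e: "0 < e" "e < 1"
  shows "\<exists>J. map_pmf fst J = PX \<and> map_pmf snd J = PY \<and>
    (\<forall>E. (\<forall>u\<in>{0..<1-e}. (qfun PX (u+e), qfun PY u) \<notin> E) \<longrightarrow> measure J E \<le> e)"
proof -
  define N where "N = distr UM (count_space UNIV) (hh PX PY e)"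
  have hm: "hh PX PY e \<in> UM \<rightarrow>\<^sub>M count_space UNIV"
    using hh_meas measurable_cong_sets by (metis sets_UM)
  have pN: "prob_space N" unfolding N_def using prob_space.prob_space_distr[OF UM_prob hm] .
  have sN: "sets N = UNIV" unfolding N_def by simp
  have "AE x in N. x \<in> set_pmf PX \<times> set_pmf PY"
  proof -
    have "AE u in UM. hh PX PY e u \<in> set_pmf PX \<times> set_pmf PY"
      unfolding UM_def
      by (rule AE_uniform_measureI) (auto simp: hh_def intro!: qfun_in gsh_range[OF e, THEN atLeastLessThan_iff[THEN iffD1, THEN conjunct1]]
         gsh_range[OF e, THEN atLeastLessThan_iff[THEN iffD1, THEN conjunct2]])
    then show ?thesis unfolding N_def by (subst AE_distr_iff[OF hm]) auto
  qed
  then have ae: "AE x in N. measure N {x} \<noteq> 0"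
    using finite_measure.AE_support_countable[OF prob_space.finite_measure[OF pN] sN]
    by (meson countable_SIGMA countable_set_pmf)
  define J where "J = Abs_pmf N"
  have JN: "measure_pmf J = N" unfolding J_def using pN sN ae by (subst Abs_pmf_inverse) auto
  have mJ: "measure J A = measure UM (hh PX PY e -` A)" for A
    unfolding JN N_def by (subst measure_distr[OF hm]) auto
  have gm: "gsh e \<in> borel_measurable borel" by (rule gsh_meas)
  have m1: "map_pmf fst J = PX"
  proof (rule pmf_eqI)
    fix x
    have "pmf (map_pmf fst J) x = measure UM {u. qfun PX (gsh e u) = x}"
      unfolding pmf_map mJ by (simp add: hh_def vimage_def)
    also have "\<dots> = measure lborel ({u. qfun PX (gsh e u) = x} \<inter> {0..<1})"
      by (subst UM_measure[OF qfun_comp_meas[OF gm]]) (simp add: Int_commute)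
    also have "\<dots> = pmf PX x"
      by (rule qfun_marg[OF marg_gsh[OF e] gsh_range[OF e]])
    finally show "pmf (map_pmf fst J) x = pmf PX x" .
  qed
  have m2: "map_pmf snd J = PY"
  proof (rule pmf_eqI)
    fix x
    have "pmf (map_pmf snd J) x = measure UM {u. qfun PY ((\<lambda>v. v) u) = x}"
      unfolding pmf_map mJ by (simp add: hh_def vimage_def)
    also have "\<dots> = measure lborel ({u. qfun PY ((\<lambda>v. v) u) = x} \<inter> {0..<1})"
      by (subst UM_measure[OF qfun_comp_meas]) (auto simp add: Int_commute)
    also have "\<dots> = pmf PY x"
      using qfun_marg[of "\<lambda>v. v" PY x] marg_id by auto
    finally show "pmf (map_pmf snd J) x = pmf PY x" .
  qed
  have bnd: "measure J E \<le> e" if H: "\<forall>u\<in>{0..<1-e}. (qfun PX (u+e), qfun PY u) \<notin> E" for E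
  proof -
    have Es: "hh PX PY e -` E \<in> sets borel"
      using measurable_sets[OF hh_meas, of E] by simp
    have "measure J E = measure lborel ({0..<1} \<inter> hh PX PY e -` E)"
      unfolding mJ by (rule UM_measure[OF Es])
    also have "\<dots> \<le> measure lborel {1-e..<1}"
    proof (rule measure_mono_fmeasurable)
      show "{0..<1} \<inter> hh PX PY e -` E \<subseteq> {1-e..<1}"
      proof
        fix u assume u: "u \<in> {0..<1} \<inter> hh PX PY e -` E"
        show "u \<in> {1-e..<1}"
        proof (rule ccontr)
          assume "u \<notin> {1-e..<1}"
          then have "u \<in> {0..<1-e}" using u by auto
          then have "hh PX PY e u = (qfun PX (u+e), qfun PY u)" unfolding hh_def gsh_def by simp
          then show False using H \<open>u \<in> {0..<1-e}\<close> u by auto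
        qed
      qed
      show "{0..<1} \<inter> hh PX PY e -` E \<in> sets lborel" using Es by simp
      show "{1-e..<1} \<in> fmeasurable lborel" using e by (auto intro!: fmeasurableI)
    qed
    also have "\<dots> = e" using e by simp
    finally show ?thesis .
  qed
  show ?thesis using m1 m2 bnd by blast
qed



theorem theorem3:
  fixes PX :: "nat \<Rightarrow> 'a pmf" and PY :: "nat \<Rightarrow> 'b pmf"
  assumes "(INF \<epsilon>\<in>{0<..<1::real}.
             liminf (\<lambda>n. INF \<delta>\<in>{0..<1 - \<epsilon>}.
                 ereal (cfun (PX n) (\<delta> + \<epsilon>) - cfun (PY n) \<delta>))) \<ge> 0"
  shows "\<exists>PXY :: nat \<Rightarrow> ('a \<times> 'b) pmf.
           (\<forall>n. map_pmf fst (PXY n) = PX n \<and> map_pmf snd (PXY n) = PY n) \<and>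
           (\<forall>\<gamma>>0. (\<lambda>n. measure_pmf.prob (PXY n)
                {(x, y). (1 / real n) * ln (1 / pmf (PX n) x)
                         - (1 / real n) * ln (1 / pmf (PY n) y) < - \<gamma>})
                \<longlonglongrightarrow> 0)"
proof -
  define ep :: "nat \<Rightarrow> real" where "ep m = 1 / (real m + 2)" for m
  have ep_pos: "0 < ep m" "ep m < 1" for m unfolding ep_def by auto
  define good where "good m n \<longleftrightarrow> (\<forall>\<delta>\<in>{0..<1 - ep m}. cfun (PX n) (\<delta> + ep m) - cfun (PY n) \<delta> > -1)" for m n
  have ev: "eventually (good m) sequentially" for m
  proof -
    have "0 \<le> liminf (\<lambda>n. INF \<delta>\<in>{0..<1 - ep m}. ereal (cfun (PX n) (\<delta> + ep m) - cfun (PY n) \<delta>))"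
      using assms ep_pos[of m] by (auto simp: le_INF_iff)
    then have "-1 < liminf (\<lambda>n. INF \<delta>\<in>{0..<1 - ep m}. ereal (cfun (PX n) (\<delta> + ep m) - cfun (PY n) \<delta>))"
      by (rule order.strict_trans2[rotated]) simp
    from less_LiminfD[OF this] show ?thesis
    proof (rule eventually_mono)
      fix n assume h: "-1 < (INF \<delta>\<in>{0..<1 - ep m}. ereal (cfun (PX n) (\<delta> + ep m) - cfun (PY n) \<delta>))"
      show "good m n" unfolding good_def
      proof
        fix \<delta> assume "\<delta> \<in> {0..<1 - ep m}"
        then have "-1 < ereal (cfun (PX n) (\<delta> + ep m) - cfun (PY n) \<delta>)" using less_INF_D[OF h] by blast
        then show "cfun (PX n) (\<delta> + ep m) - cfun (PY n) \<delta> > -1" by (simp add: one_ereal_def)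
      qed
    qed
  qed
  define mm where "mm n = (GREATEST m. m \<le> n \<and> good m n)" for n
  obtain N0 where N0: "\<And>n. n \<ge> N0 \<Longrightarrow> good 0 n" using ev[of 0] by (auto simp: eventually_sequentially)
  have mm_good: "good (mm n) n" if "n \<ge> N0" for n
  proof -
    have "mm n \<le> n \<and> good (mm n) n" unfolding mm_def
      by (rule GreatestI_nat[of _ 0 n]) (use N0[OF that] in auto)
    then show ?thesis by simp
  qed
  have mm_big: "eventually (\<lambda>n. M \<le> mm n) sequentially" for M
  proof -
    obtain N where N: "\<And>n. n \<ge> N \<Longrightarrow> good M n" using ev[of M] by (auto simp: eventually_sequentially)
    show ?thesis unfolding eventually_sequentially
    proof (intro exI[of _ "max N M"] allI impI)
      fix n assume "max N M \<le> n"
      then show "M \<le> mm n" unfolding mm_def using N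
        by (intro Greatest_le_nat[of _ M n]) auto
    qed
  qed
  define e where "e n = ep (mm n)" for n
  have e_lim: "e \<longlonglongrightarrow> 0"
  proof (rule order_tendstoI)
    fix a :: real assume "0 < a"
    then obtain M :: nat where M: "inverse (real (Suc M)) < a" using reals_Archimedean by blast
    show "eventually (\<lambda>n. e n < a) sequentially"
      using mm_big[of M]
    proof (rule eventually_mono)
      fix n assume "M \<le> mm n"
      then have "e n \<le> inverse (real (Suc M))" unfolding e_def ep_def
        by (simp add: field_simps)
      then show "e n < a" using M by simp
    qed
  next
    fix a :: real assume "a < 0"
    then show "eventually (\<lambda>n. a < e n) sequentially" using ep_pos unfolding e_def
      by (intro always_eventually allI) (meson order.strict_trans)
  qed
  have "\<forall>n. \<exists>J. map_pmf fst J = PX n \<and> map_pmf snd J = PY n \<and>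
    (\<forall>E. (\<forall>u\<in>{0..<1-e n}. (qfun (PX n) (u+e n), qfun (PY n) u) \<notin> E) \<longrightarrow> measure J E \<le> e n)"
    using coupling_exists ep_pos unfolding e_def by blast
  then obtain J where J: "\<And>n. map_pmf fst (J n) = PX n" "\<And>n. map_pmf snd (J n) = PY n"
    "\<And>n E. (\<forall>u\<in>{0..<1-e n}. (qfun (PX n) (u+e n), qfun (PY n) u) \<notin> E) \<Longrightarrow> measure (J n) E \<le> e n"
    by metis
  show ?thesis
  proof (rule exI[of _ J], rule conjI)
    show "\<forall>n. map_pmf fst (J n) = PX n \<and> map_pmf snd (J n) = PY n" using J by blast
  next
    show "\<forall>\<gamma>>0. (\<lambda>n. measure_pmf.prob (J n)
                {(x, y). (1 / real n) * ln (1 / pmf (PX n) x)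
                         - (1 / real n) * ln (1 / pmf (PY n) y) < - \<gamma>})
                \<longlonglongrightarrow> 0"
    proof (intro allI impI)
    fix \<gamma> :: real assume g: "\<gamma> > 0"
    obtain N1 :: nat where N1: "1 / \<gamma> < real N1" using reals_Archimedean2 by blast
    let ?f = "\<lambda>n. measure_pmf.prob (J n)
                {(x, y). (1 / real n) * ln (1 / pmf (PX n) x)
                         - (1 / real n) * ln (1 / pmf (PY n) y) < - \<gamma>}"
    show "?f \<longlonglongrightarrow> 0"
    proof (rule tendsto_sandwich[OF _ _ tendsto_const e_lim])
      show "eventually (\<lambda>n. 0 \<le> ?f n) sequentially" by simp
      show "eventually (\<lambda>n. ?f n \<le> e n) sequentially"
        unfolding eventually_sequentially
      proof (intro exI[of _ "max N0 N1"] allI impI)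
        fix n assume n: "max N0 N1 \<le> n"
        have gd: "good (mm n) n" using mm_good n by simp
        have n1: "real N1 \<le> real n" using n by simp
        have "0 < 1 / \<gamma>" using g by simp
        then have npos: "real n > 0" using N1 n1 by linarith
        have "1 / \<gamma> < real n" using N1 n1 by linarith
        then have ng: "1 / real n \<le> \<gamma>" using g npos by (simp add: field_simps)
        show "?f n \<le> e n"
        proof (rule J(3), intro ballI)
          fix u assume u: "u \<in> {0..<1 - e n}"
          have d: "cfun (PX n) (u + e n) - cfun (PY n) u > -1" using gd u unfolding good_def e_def by blast
          define A where "A = ln (1 / pmf (PX n) (qfun (PX n) (u + e n)))"
          define B where "B = ln (1 / pmf (PY n) (qfun (PY n) u))"
          have AB: "A - B > -1" using d unfolding A_def B_def cfun_qfun .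
          have "(1 / real n) * A - (1 / real n) * B = (A - B) / real n" by (simp add: diff_divide_distrib)
          also have "\<dots> > -1 / real n" using divide_strict_right_mono[OF AB npos] by simp
          finally have "(1 / real n) * A - (1 / real n) * B \<ge> - \<gamma>" using ng by simp
          then show "(qfun (PX n) (u + e n), qfun (PY n) u) \<notin>
            {(x, y). (1 / real n) * ln (1 / pmf (PX n) x) - (1 / real n) * ln (1 / pmf (PY n) y) < - \<gamma>}"
            unfolding A_def B_def by auto
        qed
      qed
    qed
  qed
  qed
qed

end
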